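(* Let $S$ be a semigroup with finite $\mathcal{R}$-height, and let $A$ be an ideal of $S$. Then $\mathrm{H}_{\mathcal{R}}(A)\leq \mathrm{H}_{\mathcal{R}}(S)$.
   Context: For a semigroup $S$, $S^1$ denotes $S$ with an identity adjoined if necessary. Green's preorder: $a\leq_{\mathcal{R}} b$ iff $aS^1\subseteq bS^1$; $\mathcal{R}$ is the associated equivalence; the $\mathcal{R}$-height $\mathrm{H}_{\mathcal{R}}$ of a semigroup is the supremum of the cardinalities of chains in its poset of $\mathcal{R}$-classes. An ideal is a non-empty subset $A$ with $SA\cup AS\subseteq A$; $\mathrm{H}_{\mathcal{R}}(A)$ is computed in $A$ itself. *)

theory Defs
  imports Main "HOL-Library.Extended_Nat"
begin

text \<open>Green's R-preorder computed inside a subsemigroup T (a subset closed under the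
ambient multiplication): a \<le>R b iff a \<in> b T^1, i.e. a = b or a = b x for some x in T.\<close>
definition R_le :: "'a::semigroup_mult set \<Rightarrow> 'a \<Rightarrow> 'a \<Rightarrow> bool" where
  "R_le T a b \<longleftrightarrow> a = b \<or> (\<exists>x\<in>T. a = b * x)"

definition R_class :: "'a::semigroup_mult set \<Rightarrow> 'a \<Rightarrow> 'a set" where
  "R_class T a = {b \<in> T. R_le T a b \<and> R_le T b a}"

definition R_classes :: "'a::semigroup_mult set \<Rightarrow> 'a set set" where
  "R_classes T = R_class T ` T"

definition R_class_le :: "'a::semigroup_mult set \<Rightarrow> 'a set \<Rightarrow> 'a set \<Rightarrow> bool" where
  "R_class_le T X Y \<longleftrightarrow> (\<exists>a\<in>X. \<exists>b\<in>Y. R_le T a b)"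

definition R_chain :: "'a::semigroup_mult set \<Rightarrow> 'a set set \<Rightarrow> bool" where
  "R_chain T C \<longleftrightarrow> C \<subseteq> R_classes T \<and>
     (\<forall>X\<in>C. \<forall>Y\<in>C. R_class_le T X Y \<or> R_class_le T Y X)"

definition R_height :: "'a::semigroup_mult set \<Rightarrow> enat" where
  "R_height T = (SUP C\<in>{C. R_chain T C}. if finite C then enat (card C) else \<infinity>)"

definition semigroup_ideal :: "'a::semigroup_mult set \<Rightarrow> bool" where
  "semigroup_ideal A \<longleftrightarrow> A \<noteq> {} \<and> (\<forall>s a. a \<in> A \<longrightarrow> s * a \<in> A \<and> a * s \<in> A)"

end

theory Submission
  imports Defs
begin

lemma ideal_closed: "semigroup_ideal A \<Longrightarrow> x \<in> A \<Longrightarrow> y * x \<in> A"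
  unfolding semigroup_ideal_def by blast

lemma R_le_trans_ideal:
  assumes "semigroup_ideal A" "R_le A a b" "R_le A b c"
  shows "R_le A a c"
  using assms(2,3) unfolding R_le_def
  by (metis assms(1) ideal_closed mult.assoc)

lemma R_le_univ: "R_le A a b \<Longrightarrow> R_le UNIV a b"
  unfolding R_le_def by blast

lemma R_le_back:
  assumes "semigroup_ideal A" "R_le A a b" "R_le UNIV b a"
  shows "R_le A b a"
proof -
  consider "a = b" | x where "x \<in> A" "a = b * x"
    using assms(2) unfolding R_le_def by blast
  then show ?thesis
  proof cases
    case 1 then show ?thesis by (simp add: R_le_def)
  next
    case 2
    consider "b = a" | s where "b = a * s"
      using assms(3) unfolding R_le_def by blast
    then show ?thesis
    proof cases
      case 1 then show ?thesis by (simp add: R_le_def)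
    next
      case (2 s)
      have e: "b = b * (x * s)" using 2 \<open>a = b * x\<close> by (simp add: mult.assoc)
      have "b = b * (x * s) * (x * s)" using e by (metis mult.assoc)
      also have "\<dots> = a * (s * x * s)" using \<open>a = b * x\<close> by (simp add: mult.assoc)
      finally have "b = a * (s * x * s)" .
      moreover have "s * x * s \<in> A"
        using assms(1) \<open>x \<in> A\<close> unfolding semigroup_ideal_def by blast
      ultimately show ?thesis unfolding R_le_def by blast
    qed
  qed
qed

lemma R_class_mem: "a \<in> T \<Longrightarrow> a \<in> R_class T a"
  unfolding R_class_def R_le_def by simp

lemma R_class_eq:
  assumes "semigroup_ideal A" "X \<in> R_classes A" "a \<in> X"
  shows "X = R_class A a"
proof -
  obtain c where c: "c \<in> A" "X = R_class A c" using assms(2) unfolding R_classes_def by blast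
  have ac: "R_le A a c" "R_le A c a" using assms(3) c unfolding R_class_def by auto
  show ?thesis unfolding c(2) R_class_def
    using ac R_le_trans_ideal[OF assms(1)] by blast
qed

lemma R_classes_sub: "X \<in> R_classes A \<Longrightarrow> a \<in> X \<Longrightarrow> a \<in> A"
  unfolding R_classes_def R_class_def by auto

lemma R_classes_ne: "X \<in> R_classes A \<Longrightarrow> \<exists>a. a \<in> X"
  unfolding R_classes_def using R_class_mem by blast

theorem corollary3p15:
  fixes A :: "'a::semigroup_mult set"
  assumes "R_height (UNIV :: 'a set) < \<infinity>"
    and "semigroup_ideal A"
  shows "R_height A \<le> R_height (UNIV :: 'a set)"
proof -
  note id = assms(2)
  define rep where "rep X = (SOME a. a \<in> X)" for X :: "'a set"
  define f where "f X = R_class (UNIV :: 'a set) (rep X)" for X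
  have rep: "rep X \<in> X" if "X \<in> R_classes A" for X
    using R_classes_ne[OF that] unfolding rep_def by (metis someI_ex)
  have cmp: "R_le A (rep X) (rep Y)"
    if hh: "X \<in> R_classes A" "Y \<in> R_classes A" "R_class_le A X Y" for X Y
  proof -
    obtain a b where ab: "a \<in> X" "b \<in> Y" "R_le A a b" using hh(3) unfolding R_class_le_def by blast
    have "X = R_class A a" "X = R_class A (rep X)" using R_class_eq[OF id hh(1)] ab rep[OF hh(1)] by auto
    hence "R_le A (rep X) a" using rep[OF hh(1)] R_class_mem[OF R_classes_sub[OF hh(1) ab(1)]]
      unfolding R_class_def by auto
    moreover have "Y = R_class A b" "Y = R_class A (rep Y)" using R_class_eq[OF id hh(2)] ab rep[OF hh(2)] by auto
    hence "R_le A b (rep Y)" using rep[OF hh(2)] R_class_mem[OF R_classes_sub[OF hh(2) ab(2)]]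
      unfolding R_class_def by auto
    ultimately show ?thesis using ab(3) R_le_trans_ideal[OF id] by blast
  qed
  show ?thesis
    unfolding R_height_def[of A]
  proof (rule SUP_least)
    fix C assume "C \<in> {C. R_chain A C}"
    hence ch: "C \<subseteq> R_classes A" "\<forall>X\<in>C. \<forall>Y\<in>C. R_class_le A X Y \<or> R_class_le A Y X"
      unfolding R_chain_def by auto
    have inj: "inj_on f C"
    proof (rule inj_onI)
      fix X Y assume XY: "X \<in> C" "Y \<in> C" "f X = f Y"
      have Xc: "X \<in> R_classes A" "Y \<in> R_classes A" using XY ch by auto
      have eqS: "R_le UNIV (rep X) (rep Y)" "R_le UNIV (rep Y) (rep X)"
      proof -
        have "rep Y \<in> f Y" unfolding f_def using R_class_mem by blast
        hence "rep Y \<in> f X" using XY by simp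
        thus "R_le UNIV (rep X) (rep Y)" "R_le UNIV (rep Y) (rep X)"
          unfolding f_def R_class_def by auto
      qed
      have both: "R_le A (rep X) (rep Y) \<and> R_le A (rep Y) (rep X)"
        using ch(2) XY(1,2) cmp[OF Xc(1,2)] cmp[OF Xc(2,1)] R_le_back[OF id] eqS by blast
      have "X = R_class A (rep X)" using R_class_eq[OF id Xc(1) rep[OF Xc(1)]] .
      moreover have "Y = R_class A (rep X)"
      proof -
        have "Y = R_class A (rep Y)" using R_class_eq[OF id Xc(2) rep[OF Xc(2)]] .
        hence "rep X \<in> Y" using both R_classes_sub[OF Xc(1) rep[OF Xc(1)]] unfolding R_class_def by auto
        thus ?thesis using R_class_eq[OF id Xc(2)] by blast
      qed
      ultimately show "X = Y" by simp
    qed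
    have chS: "R_chain UNIV (f ` C)"
      unfolding R_chain_def
    proof (intro conjI ballI)
      show "f ` C \<subseteq> R_classes UNIV" unfolding f_def R_classes_def by auto
    next
      fix U V assume "U \<in> f ` C" "V \<in> f ` C"
      then obtain X Y where XY: "X \<in> C" "Y \<in> C" "U = f X" "V = f Y" by blast
      have Xc: "X \<in> R_classes A" "Y \<in> R_classes A" using XY ch by auto
      have m: "rep X \<in> U" "rep Y \<in> V" unfolding XY f_def using R_class_mem by blast+
      have "R_le A (rep X) (rep Y) \<or> R_le A (rep Y) (rep X)"
        using ch(2) XY(1,2) cmp[OF Xc(1,2)] cmp[OF Xc(2,1)] by blast
      thus "R_class_le UNIV U V \<or> R_class_le UNIV V U"
        unfolding R_class_le_def using m R_le_univ by blast
    qed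
    have "(if finite C then enat (card C) else \<infinity>) = (if finite (f ` C) then enat (card (f ` C)) else \<infinity>)"
      using inj by (simp add: card_image finite_image_iff)
    also have "\<dots> \<le> R_height (UNIV :: 'a set)"
      unfolding R_height_def by (rule SUP_upper2[where i="f ` C"]) (use chS in auto)
    finally show "(if finite C then enat (card C) else \<infinity>) \<le> R_height (UNIV :: 'a set)" .
  qed
qed

end
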